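(* There exists a constant $\beta>0$ such that the following holds for every $r=r(n)$ with $4\le r$ and $r=o(\log n)$, and every $p=p(n)\ge\beta\frac{\log n}{rn}$. Let $G\in\mathcal G(n,p)$ and let $H$ be the subgraph of $G$ induced by the vertices of degree at most $np/2$. Then with high probability every connected component of $H$ has at most $r-3$ vertices.
   Context: $\mathcal G(n,p)$ is the Erdős–Rényi random graph on vertex set $[n]$ in which each pair is an edge independently with probability $p$. "With high probability" means with probability tending to $1$ as $n\to\infty$. *)

theory Defs
  imports "HOL-Probability.Probability" "HOL-Library.Landau_Symbols"
begin

text \<open>A graph on vertex set {0..<n} is represented by its edge indicator
  G :: nat set \<Rightarrow> bool, where G {u,v} says that uv is an edge.\<close>

definition all_edges :: "nat \<Rightarrow> nat set set" where
  "all_edges n = {{u, v} | u v. u < n \<and> v < n \<and> u \<noteq> v}"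

definition gnp :: "nat \<Rightarrow> real \<Rightarrow> (nat set \<Rightarrow> bool) pmf" where
  "gnp n p = Pi_pmf (all_edges n) False (\<lambda>_. bernoulli_pmf p)"

definition deg :: "nat \<Rightarrow> (nat set \<Rightarrow> bool) \<Rightarrow> nat \<Rightarrow> nat" where
  "deg n G v = card {u. u < n \<and> u \<noteq> v \<and> G {u, v}}"

definition low_vertices :: "nat \<Rightarrow> real \<Rightarrow> (nat set \<Rightarrow> bool) \<Rightarrow> nat set" where
  "low_vertices n p G = {v. v < n \<and> real (deg n G v) \<le> real n * p / 2}"

definition induced_adj :: "nat set \<Rightarrow> (nat set \<Rightarrow> bool) \<Rightarrow> nat \<Rightarrow> nat \<Rightarrow> bool" where
  "induced_adj S G a b \<longleftrightarrow> a \<in> S \<and> b \<in> S \<and> a \<noteq> b \<and> G {a, b}"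

definition component :: "nat set \<Rightarrow> (nat set \<Rightarrow> bool) \<Rightarrow> nat \<Rightarrow> nat set" where
  "component S G v = {w. (induced_adj S G)\<^sup>*\<^sup>* v w}"

end

theory Submission
  imports Defs
begin


definition Ev :: "nat \<Rightarrow> real \<Rightarrow> nat set \<Rightarrow> nat \<Rightarrow> (nat \<Rightarrow> nat) \<Rightarrow> (nat set \<Rightarrow> bool) set" where
  "Ev n p X rt par = {G. (\<forall>y\<in>X-{rt}. G {y, par y}) \<and> (\<forall>y\<in>X. real (deg n G y) \<le> real n * p / 2)}"

lemma finite_all_edges: "finite (all_edges n)"
proof -
  have "all_edges n \<subseteq> Pow {..<n}" unfolding all_edges_def by auto
  thus ?thesis by (meson finite_Pow_iff finite_lessThan finite_subset)
qed

lemma finite_set_bern: "finite (set_pmf (bernoulli_pmf p))"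
  by (rule finite_subset[of _ UNIV]) auto

lemma finite_set_gnp: "finite (set_pmf (gnp n p))"
proof -
  have "set_pmf (gnp n p) \<subseteq> (\<lambda>S x. x \<in> S) ` Pow (all_edges n)"
  proof
    fix G assume "G \<in> set_pmf (gnp n p)"
    hence "\<forall>x. x \<notin> all_edges n \<longrightarrow> G x = False"
      using set_Pi_pmf_subset[OF finite_all_edges, of n False "\<lambda>_. bernoulli_pmf p"] unfolding gnp_def by auto
    hence "G = (\<lambda>x. x \<in> {x. G x})" "{x. G x} \<subseteq> all_edges n" by auto
    thus "G \<in> (\<lambda>S x. x \<in> S) ` Pow (all_edges n)" by blast
  qed
  moreover have "finite ((\<lambda>S x. x \<in> S) ` Pow (all_edges n))" using finite_all_edges by simp
  ultimately show ?thesis by (rule finite_subset)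
qed

lemma event_bound:
  fixes p :: real
  assumes X: "X \<subseteq> {..<n}" "card X = k" "rt \<in> X"
    and par: "\<forall>y\<in>X-{rt}. par y \<in> X \<and> par y \<noteq> y"
    and inj: "inj_on (\<lambda>y. {y, par y}) (X-{rt})"
    and p: "0 \<le> p" "p \<le> 1"
  shows "measure_pmf.prob (gnp n p) (Ev n p X rt par)
     \<le> exp (real k * real n * p / 2) * p ^ (k - 1) * (1 - p + p * exp (-1)) ^ (k * (n - k))"
proof -
  define A where "A = all_edges n"
  define T where "T = (\<lambda>y. {y, par y}) ` (X-{rt})"
  define Cr where "Cr = {{u, y} | u y. u < n \<and> u \<notin> X \<and> y \<in> X}"
  define q where "q = 1 - p + p * exp (-1)"
  have finA: "finite A" unfolding A_def by (rule finite_all_edges)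
  have finX: "finite X" using X(1) by (rule finite_subset) simp
  have TA: "T \<subseteq> A" unfolding T_def A_def all_edges_def using par X(1) by blast
  have CA: "Cr \<subseteq> A" unfolding Cr_def A_def all_edges_def using X(1) by blast
  have TC: "T \<inter> Cr = {}"
  proof -
    { fix e assume "e \<in> T" "e \<in> Cr"
      then obtain y where y: "y \<in> X-{rt}" "e = {y, par y}" unfolding T_def by auto
      from \<open>e \<in> Cr\<close> obtain u z where "e = {u,z}" "u \<notin> X" unfolding Cr_def by auto
      hence False using y par by auto }
    thus ?thesis by blast
  qed
  define f1 where "f1 = (\<lambda>e b. if e \<in> T then (if b then 1 else 0) else (1::real))"
  define f2 where "f2 = (\<lambda>e b. if e \<in> Cr \<and> b then exp (-1) else (1::real))"
  define f where "f = (\<lambda>e b. f1 e b * f2 e b)"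
  define c where "c = exp (real k * real n * p / 2)"
  define g where "g = (\<lambda>G. c * (\<Prod>e\<in>A. f e (G e)))"
  have fnn: "\<And>e b. 0 \<le> f e b" unfolding f_def f1_def f2_def by auto
  have gnn: "\<And>G. 0 \<le> g G" unfolding g_def c_def using fnn by (simp add: prod_nonneg)
  have gEv: "1 \<le> g G" if G: "G \<in> Ev n p X rt par" for G
  proof -
    have p1: "(\<Prod>e\<in>A. f1 e (G e)) = 1"
      using G unfolding f1_def Ev_def T_def by (intro prod.neutral) auto
    define D where "D = Cr \<inter> {e. G e}"
    have p2: "(\<Prod>e\<in>A. f2 e (G e)) = exp (-1) ^ card D"
    proof -
      have "(\<Prod>e\<in>A. f2 e (G e)) = (\<Prod>e\<in>A \<inter> {e. e \<in> Cr \<and> G e}. exp (-1)) * (\<Prod>e\<in>A \<inter> - {e. e \<in> Cr \<and> G e}. 1)"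
        unfolding f2_def by (rule prod.If_cases[OF finA])
      also have "A \<inter> {e. e \<in> Cr \<and> G e} = D" unfolding D_def using CA by auto
      finally show ?thesis by simp
    qed
    have Dsub: "D \<subseteq> (\<Union>y\<in>X. (\<lambda>u. {u, y}) ` {u. u < n \<and> u \<notin> X \<and> G {u, y}})"
      unfolding D_def Cr_def by auto
    have "card D \<le> card (\<Union>y\<in>X. (\<lambda>u. {u, y}) ` {u. u < n \<and> u \<notin> X \<and> G {u, y}})"
      by (intro card_mono Dsub finite_UN_I finX finite_imageI) auto
    also have "\<dots> \<le> (\<Sum>y\<in>X. card ((\<lambda>u. {u, y}) ` {u. u < n \<and> u \<notin> X \<and> G {u, y}}))"
      by (rule card_UN_le[OF finX])
    also have "\<dots> \<le> (\<Sum>y\<in>X. deg n G y)"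
    proof (intro sum_mono)
      fix y assume y: "y \<in> X"
      have "card ((\<lambda>u. {u, y}) ` {u. u < n \<and> u \<notin> X \<and> G {u, y}}) \<le> card {u. u < n \<and> u \<notin> X \<and> G {u, y}}"
        by (rule card_image_le) auto
      also have "\<dots> \<le> deg n G y" unfolding deg_def using y by (intro card_mono) auto
      finally show "card ((\<lambda>u. {u, y}) ` {u. u < n \<and> u \<notin> X \<and> G {u, y}}) \<le> deg n G y" .
    qed
    finally have cD: "real (card D) \<le> (\<Sum>y\<in>X. real (deg n G y))" by (simp flip: of_nat_sum)
    also have "\<dots> \<le> (\<Sum>y\<in>X. real n * p / 2)" using G unfolding Ev_def by (intro sum_mono) auto
    also have "\<dots> = real k * real n * p / 2" using X(2) by simp
    finally have cD': "real (card D) \<le> real k * real n * p / 2" .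
    have "(\<Prod>e\<in>A. f e (G e)) = exp (- real (card D))"
      unfolding f_def prod.distrib p1 p2 by (simp add: exp_of_nat_mult[symmetric])
    hence "g G = exp (real k * real n * p / 2) * exp (- real (card D))"
      unfolding g_def c_def by simp
    also have "\<dots> = exp (real k * real n * p / 2 - real (card D))"
      by (simp add: mult_exp_exp)
    also have "\<dots> \<ge> 1" using cD' by simp
    finally show ?thesis .
  qed
  have int_g: "integrable (measure_pmf (gnp n p)) g"
    by (rule integrable_measure_pmf_finite[OF finite_set_gnp])
  have "measure_pmf.prob (gnp n p) (Ev n p X rt par) = measure_pmf.expectation (gnp n p) (indicator (Ev n p X rt par))"
    by simp
  also have "\<dots> \<le> measure_pmf.expectation (gnp n p) g"
  proof (rule integral_mono[OF integrable_measure_pmf_finite[OF finite_set_gnp] int_g])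
    fix G show "indicator (Ev n p X rt par) G \<le> g G"
      using gnn[of G] gEv[of G] by (cases "G \<in> Ev n p X rt par") auto
  qed
  also have "measure_pmf.expectation (gnp n p) g = c * measure_pmf.expectation (gnp n p) (\<lambda>G. \<Prod>e\<in>A. f e (G e))"
    unfolding g_def by (rule integral_mult_right_zero)
  also have "measure_pmf.expectation (gnp n p) (\<lambda>G. \<Prod>e\<in>A. f e (G e)) = (\<Prod>e\<in>A. measure_pmf.expectation (bernoulli_pmf p) (f e))"
    unfolding gnp_def A_def
    by (rule expectation_prod_Pi_pmf[OF finite_all_edges integrable_measure_pmf_finite[OF finite_set_bern] fnn])
  also have "(\<Prod>e\<in>A. measure_pmf.expectation (bernoulli_pmf p) (f e))
     = (\<Prod>e\<in>A. (if e \<in> T then p else 1) * (if e \<in> Cr then q else 1))"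
  proof (rule prod.cong[OF refl])
    fix e assume "e \<in> A"
    show "measure_pmf.expectation (bernoulli_pmf p) (f e) = (if e \<in> T then p else 1) * (if e \<in> Cr then q else 1)"
    proof (cases "e \<in> T")
      case True
      hence "e \<notin> Cr" using TC by blast
      thus ?thesis using True p by (simp add: f_def f1_def f2_def)
    next
      case False
      thus ?thesis using p by (cases "e \<in> Cr") (simp_all add: f_def f1_def f2_def q_def)
    qed
  qed
  also have "\<dots> = (\<Prod>e\<in>A. (if e \<in> T then p else 1)) * (\<Prod>e\<in>A. (if e \<in> Cr then q else 1))"
    by (rule prod.distrib)
  also have "(\<Prod>e\<in>A. (if e \<in> T then p else 1)) = p ^ card T"
  proof -
    have "{x \<in> A. x \<in> T} = T" using TA by auto
    thus ?thesis using finA by (subst prod.If_cases) (simp_all add: Int_def)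
  qed
  also have "(\<Prod>e\<in>A. (if e \<in> Cr then q else 1)) = q ^ card Cr"
  proof -
    have "{x \<in> A. x \<in> Cr} = Cr" using CA by auto
    thus ?thesis using finA by (subst prod.If_cases) (simp_all add: Int_def)
  qed
  also have "card T = k - 1"
    unfolding T_def using inj X finX by (simp add: card_image)
  finally have b1: "measure_pmf.prob (gnp n p) (Ev n p X rt par) \<le> c * (p ^ (k - 1) * q ^ card Cr)" .
  have "k * (n - k) \<le> card Cr"
  proof -
    define U where "U = {u. u < n \<and> u \<notin> X}"
    define h where "h = (\<lambda>(u::nat,y::nat). {u,y})"
    have injh: "inj_on h (U \<times> X)"
      unfolding h_def U_def by (auto simp: inj_on_def doubleton_eq_iff)
    have imh: "h ` (U \<times> X) \<subseteq> Cr" unfolding Cr_def h_def U_def by auto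
    have finCr: "finite Cr" using CA finA by (rule finite_subset)
    have "card (U \<times> X) = card (h ` (U \<times> X))" by (rule card_image[OF injh, symmetric])
    also have "\<dots> \<le> card Cr" by (rule card_mono[OF finCr imh])
    finally have c1: "card (U \<times> X) \<le> card Cr" .
    have "U = {..<n} - X" unfolding U_def by auto
    hence c2: "card U = n - k" using X finX by (simp add: card_Diff_subset)
    have "card (U \<times> X) = (n - k) * k" using c2 X(2) by (simp add: card_cartesian_product)
    thus ?thesis using c1 by (simp add: mult.commute)
  qed
  moreover have "0 \<le> q" unfolding q_def using p by simp
  moreover have "p * exp (-1) \<le> p * 1" using p by (intro mult_left_mono) auto
  hence "q \<le> 1" unfolding q_def by simp
  ultimately have "q ^ card Cr \<le> q ^ (k * (n - k))" by (simp add: power_decreasing)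
  hence "c * (p ^ (k - 1) * q ^ card Cr) \<le> c * (p ^ (k - 1) * q ^ (k * (n - k)))"
    using p by (intro mult_left_mono) (auto simp: c_def)
  with b1 have "measure_pmf.prob (gnp n p) (Ev n p X rt par) \<le> c * (p ^ (k - 1) * q ^ (k * (n - k)))"
    by (rule order_trans)
  thus ?thesis unfolding c_def q_def by (simp only: mult.assoc)
qed


definition Idx :: "nat \<Rightarrow> nat \<Rightarrow> (nat set \<times> nat \<times> (nat \<Rightarrow> nat)) set" where
  "Idx n k = {(X, rt, par). X \<subseteq> {..<n} \<and> card X = k \<and> rt \<in> X \<and> par \<in> (X-{rt}) \<rightarrow>\<^sub>E X
      \<and> (\<forall>y\<in>X-{rt}. par y \<noteq> y) \<and> inj_on (\<lambda>y. {y, par y}) (X-{rt})}"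

lemma comp_sub: assumes "v \<in> S" shows "component S G v \<subseteq> S"
proof
  fix w assume "w \<in> component S G v"
  hence "(induced_adj S G)\<^sup>*\<^sup>* v w" unfolding component_def by simp
  thus "w \<in> S" using assms by (induction rule: rtranclp_induct) (auto simp: induced_adj_def)
qed

lemma exits:
  assumes "(induced_adj S G)\<^sup>*\<^sup>* v w" "v \<in> X"
  shows "w \<in> X \<or> (\<exists>a b. a \<in> X \<and> b \<notin> X \<and> induced_adj S G a b \<and> (induced_adj S G)\<^sup>*\<^sup>* v b)"
  using assms
proof (induction rule: rtranclp_induct)
  case base thus ?case by simp
next
  case (step y z)
  show ?case
  proof (cases "y \<in> X")
    case True
    show ?thesis
    proof (cases "z \<in> X")
      case False
      have "(induced_adj S G)\<^sup>*\<^sup>* v z" using step(1,2) by (rule rtranclp.rtrancl_into_rtrancl)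
      thus ?thesis using True False step(2) by blast
    qed simp
  next
    case False
    thus ?thesis using step by auto
  qed
qed

lemma grow:
  assumes v: "v \<in> S" and S: "S \<subseteq> {..<n}" and j: "1 \<le> j" "j \<le> card (component S G v)"
  shows "\<exists>X par (rank :: nat \<Rightarrow> nat). X \<subseteq> component S G v \<and> v \<in> X \<and> card X = j \<and> par \<in> (X-{v}) \<rightarrow>\<^sub>E X \<and>
           (\<forall>y\<in>X-{v}. induced_adj S G y (par y) \<and> rank (par y) < rank y)"
  using j
proof (induction j)
  case 0 thus ?case by simp
next
  case (Suc j)
  have vC: "v \<in> component S G v" unfolding component_def by simp
  have "component S G v \<subseteq> {..<n}" using comp_sub[OF v] S by (rule subset_trans)
  hence finC: "finite (component S G v)" by (rule finite_subset) simp
  show ?case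
  proof (cases "j = 0")
    case True
    have e: "(\<lambda>_. undefined) \<in> ({v} - {v}) \<rightarrow>\<^sub>E {v}" by (rule PiE_I) auto
    have "{v} \<subseteq> component S G v \<and> v \<in> {v} \<and> card {v} = Suc j \<and> (\<lambda>_. undefined) \<in> ({v}-{v}) \<rightarrow>\<^sub>E {v} \<and>
           (\<forall>y\<in>{v}-{v}. induced_adj S G y ((\<lambda>_. undefined) y) \<and> (\<lambda>_. 0::nat) ((\<lambda>_. undefined) y) < (\<lambda>_. 0::nat) y)"
      using True vC e by simp
    thus ?thesis by (intro exI)
  next
    case False
    have j1: "1 \<le> j" using False by simp
    have j2: "j \<le> card (component S G v)" using Suc.prems by simp
    from Suc.IH[OF j1 j2] obtain X par and rank :: "nat \<Rightarrow> nat" where X: "X \<subseteq> component S G v" "v \<in> X" "card X = j"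
      "par \<in> (X-{v}) \<rightarrow>\<^sub>E X" "\<forall>y\<in>X-{v}. induced_adj S G y (par y) \<and> rank (par y) < rank y"
      by blast
    have finX: "finite X" using X(1) finC by (rule finite_subset)
    have "X \<noteq> component S G v" using X(3) Suc.prems by auto
    then obtain w where w: "w \<in> component S G v" "w \<notin> X" using X(1) by blast
    hence "(induced_adj S G)\<^sup>*\<^sup>* v w" unfolding component_def by simp
    from exits[OF this X(2)] w(2) obtain a b where ab: "a \<in> X" "b \<notin> X" "induced_adj S G a b"
      "(induced_adj S G)\<^sup>*\<^sup>* v b" by blast
    have bC: "b \<in> component S G v" using ab(4) unfolding component_def by simp
    have ba: "induced_adj S G b a" using ab(3) unfolding induced_adj_def by (auto simp: insert_commute)
    define m where "m = Suc (Max (rank ` X))"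
    have rm: "rank y < m" if "y \<in> X" for y
    proof -
      have "rank y \<le> Max (rank ` X)" using finX that by (intro Max_ge) auto
      thus ?thesis unfolding m_def by simp
    qed
    define par' where "par' = par(b := a)"
    define rank' where "rank' = rank(b := m)"
    have c1: "insert b X \<subseteq> component S G v" using X(1) bC by blast
    have c2: "v \<in> insert b X" using X(2) by blast
    have c3: "card (insert b X) = Suc j" using X(3) ab(2) finX by simp
    have bv: "b \<noteq> v" using ab(2) X(2) by blast
    have c4: "par' \<in> (insert b X - {v}) \<rightarrow>\<^sub>E insert b X"
    proof (rule PiE_I)
      fix y assume y: "y \<in> insert b X - {v}"
      show "par' y \<in> insert b X"
      proof (cases "y = b")
        case True thus ?thesis using ab(1) unfolding par'_def by simp
      next
        case False
        hence "y \<in> X - {v}" using y by blast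
        hence "par y \<in> X" by (rule PiE_mem[OF X(4)])
        thus ?thesis using False unfolding par'_def by simp
      qed
    next
      fix y assume y: "y \<notin> insert b X - {v}"
      hence "y \<noteq> b" using bv by blast
      moreover have "y \<notin> X - {v}" using y by blast
      hence "par y = undefined" using X(4) by (simp add: PiE_def extensional_def)
      ultimately show "par' y = undefined" unfolding par'_def by simp
    qed
    have c5: "\<forall>y\<in>insert b X - {v}. induced_adj S G y (par' y) \<and> rank' (par' y) < rank' y"
    proof
      fix y assume y: "y \<in> insert b X - {v}"
      show "induced_adj S G y (par' y) \<and> rank' (par' y) < rank' y"
      proof (cases "y = b")
        case True
        have "a \<noteq> b" using ab by blast
        hence "rank' a = rank a" unfolding rank'_def by simp
        moreover have "rank' b = m" unfolding rank'_def by simp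
        moreover have "par' b = a" unfolding par'_def by simp
        ultimately show ?thesis using True ba rm[OF ab(1)] by simp
      next
        case False
        hence yX: "y \<in> X - {v}" using y by blast
        hence "par y \<in> X" by (rule PiE_mem[OF X(4)])
        hence pb: "par y \<noteq> b" using ab(2) by blast
        have "par' y = par y" using False unfolding par'_def by simp
        moreover have "rank' (par y) = rank (par y)" using pb unfolding rank'_def by simp
        moreover have "rank' y = rank y" using False unfolding rank'_def by simp
        ultimately show ?thesis using X(5) yX by simp
      qed
    qed
    have "insert b X \<subseteq> component S G v \<and> v \<in> insert b X \<and> card (insert b X) = Suc j \<and>
      par' \<in> (insert b X - {v}) \<rightarrow>\<^sub>E insert b X \<and>
      (\<forall>y\<in>insert b X - {v}. induced_adj S G y (par' y) \<and> rank' (par' y) < rank' y)"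
      using c1 c2 c3 c4 c5 by (intro conjI)
    thus ?thesis by (intro exI)
  qed
qed

lemma bad_subset:
  assumes k: "1 \<le> k"
  shows "{G. \<not> (\<forall>v \<in> low_vertices n p G. card (component (low_vertices n p G) G v) \<le> k - 1)}
         \<subseteq> (\<Union>(X, rt, par) \<in> Idx n k. Ev n p X rt par)"
proof
  fix G assume "G \<in> {G. \<not> (\<forall>v \<in> low_vertices n p G. card (component (low_vertices n p G) G v) \<le> k - 1)}"
  hence "\<exists>v \<in> low_vertices n p G. \<not> card (component (low_vertices n p G) G v) \<le> k - 1" by simp
  then obtain v where v: "v \<in> low_vertices n p G" and c0: "\<not> card (component (low_vertices n p G) G v) \<le> k - 1"
    by blast
  have c: "k \<le> card (component (low_vertices n p G) G v)" using c0 k by linarith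
  define S where "S = low_vertices n p G"
  have S: "S \<subseteq> {..<n}" unfolding S_def low_vertices_def by auto
  have vS: "v \<in> S" using v unfolding S_def .
  have cS: "k \<le> card (component S G v)" using c unfolding S_def .
  from grow[OF vS S k cS] obtain X par and rank :: "nat \<Rightarrow> nat" where X: "X \<subseteq> component S G v" "v \<in> X" "card X = k"
    "par \<in> (X-{v}) \<rightarrow>\<^sub>E X" "\<forall>y\<in>X-{v}. induced_adj S G y (par y) \<and> rank (par y) < rank y"
    by blast
  have XS: "X \<subseteq> S" using X(1) comp_sub[of v S G] v unfolding S_def by blast
  have inj: "inj_on (\<lambda>y. {y, par y}) (X-{v})"
  proof (rule inj_onI)
    fix y z assume yz: "y \<in> X-{v}" "z \<in> X-{v}" "{y, par y} = {z, par z}"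
    show "y = z"
    proof (rule ccontr)
      assume "y \<noteq> z"
      hence e: "y = par z" "z = par y" using yz(3) by (auto simp: doubleton_eq_iff)
      have r1: "rank (par z) < rank z" using X(5) yz(2) by blast
      have r2: "rank (par y) < rank y" using X(5) yz(1) by blast
      have "rank y < rank z" using r1 e(1) by simp
      moreover have "rank z < rank y" using r2 e(2) by simp
      ultimately show False by simp
    qed
  qed
  have np: "\<forall>y\<in>X-{v}. par y \<noteq> y"
  proof
    fix y assume "y \<in> X-{v}"
    hence "induced_adj S G y (par y)" using X(5) by blast
    thus "par y \<noteq> y" unfolding induced_adj_def by auto
  qed
  have "X \<subseteq> {..<n}" using XS S by blast
  hence idx: "(X, v, par) \<in> Idx n k"
    unfolding Idx_def using X(2,3,4) inj np by blast
  have e1: "\<forall>y\<in>X-{v}. G {y, par y}" using X(5) unfolding induced_adj_def by blast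
  have e2: "\<forall>y\<in>X. real (deg n G y) \<le> real n * p / 2" using XS unfolding S_def low_vertices_def by blast
  have gev: "G \<in> Ev n p X v par" unfolding Ev_def using e1 e2 by blast
  show "G \<in> (\<Union>(X, rt, par) \<in> Idx n k. Ev n p X rt par)" by (rule UN_I[OF idx]) (simp add: gev)
qed


lemma exp_ge_sum:
  fixes x :: real assumes "0 \<le> x" "finite I"
  shows "(\<Sum>m\<in>I. x ^ m / fact m) \<le> exp x"
proof -
  have s: "(\<lambda>m. x ^ m / fact m) sums exp x"
    using exp_converges[of x] by (simp add: divide_inverse scaleR_conv_of_real mult.commute)
  have "(\<Sum>m\<in>I. x ^ m / fact m) \<le> suminf (\<lambda>m. x ^ m / fact m)"
    by (rule sum_le_suminf[OF sums_summable[OF s] assms(2)]) (use assms in auto)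
  thus ?thesis using sums_unique[OF s] by simp
qed

lemma pow_fact_le_exp: "(real k) ^ k / fact k \<le> exp (real k)"
  using exp_ge_sum[of "real k" "{k}"] by simp

lemma exp1_ge: "5/2 \<le> exp (1::real)"
proof -
  have "(\<Sum>m\<in>{0,1,2::nat}. (1::real) ^ m / fact m) \<le> exp 1" by (rule exp_ge_sum) auto
  thus ?thesis by (simp add: numeral_2_eq_2)
qed

lemma choose_fact_le: assumes "k \<le> n" shows "real (n choose k) * fact k \<le> real n ^ k"
proof -
  have "fact k * fact (n - k) * (n choose k) = fact n" by (rule binomial_fact_lemma[OF assms])
  hence "(n choose k) * fact k = fact n div fact (n - k)" by (metis mult.commute nonzero_mult_div_cancel_left fact_nonzero mult.assoc)
  also have "\<dots> \<le> n ^ k" by (rule fact_div_fact_le_pow[OF assms])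
  finally have "(n choose k) * fact k \<le> n ^ k" .
  hence "real ((n choose k) * fact k) \<le> real (n ^ k)" by (simp only: of_nat_le_iff)
  thus ?thesis by simp
qed

lemma analytic:
  fixes n k :: nat and p :: real
  assumes k2: "2 \<le> k" and kn: "12 * k \<le> n" and p: "0 \<le> p" "p \<le> 1"
    and d: "10000 \<le> real n * p" and kd: "160 * ln (real n) \<le> real k * (real n * p)" and n1: "1 \<le> n"
  shows "real (n choose k) * real k ^ k * (exp (real k * real n * p / 2) * p ^ (k - 1) * (1 - p + p * exp (-1)) ^ (k * (n - k))) \<le> 1 / real n"
proof -
  define d where "d = real n * p"
  define c0 where "c0 = 1 - exp (-1::real)"
  define q where "q = 1 - p + p * exp (-1)"
  have ppos: "0 < p" using d p n1 by (cases "p = 0") auto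
  have dpos: "1 \<le> d" using d d_def by simp
  have e1: "exp (-1::real) \<le> 2/5"
    using exp1_ge by (simp add: exp_minus divide_simps)
  have c0: "3/5 \<le> c0" unfolding c0_def using e1 by simp
  have q: "q = 1 + (- p * c0)" unfolding q_def c0_def by (simp add: algebra_simps)
  have q0: "0 \<le> q" unfolding q_def using p by simp
  have qe: "q \<le> exp (- p * c0)" unfolding q by (rule exp_ge_add_one_self)
  have m: "11/12 * real k * real n \<le> real (k * (n - k))"
  proof -
    have "real (n - k) \<ge> 11/12 * real n" using kn by (simp add: of_nat_diff)
    hence "real k * real (n - k) \<ge> real k * (11/12 * real n)" by (intro mult_left_mono) auto
    thus ?thesis by simp
  qed
  have "q ^ (k * (n - k)) \<le> exp (- p * c0) ^ (k * (n - k))"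
    by (rule power_mono[OF qe q0])
  also have "\<dots> = exp (real (k * (n - k)) * (- p * c0))" by (simp only: exp_of_nat_mult)
  also have "\<dots> \<le> exp (- (11/20) * real k * d)"
  proof -
    have "(11/12 * real k * real n) * (p * (3/5)) \<le> real (k * (n - k)) * (p * (3/5))"
      by (rule mult_right_mono[OF m]) (use p in simp)
    also have "\<dots> \<le> real (k * (n - k)) * (p * c0)"
      by (rule mult_left_mono[OF mult_left_mono[OF c0 p(1)]]) simp
    finally have i1: "(11/12 * real k * real n) * (p * (3/5)) \<le> real (k * (n - k)) * (p * c0)" .
    have e1: "real (k * (n - k)) * (- p * c0) = - (real (k * (n - k)) * (p * c0))" by simp
    have e2: "(11/12 * real k * real n) * (p * (3/5)) = (11/20) * real k * d" unfolding d_def by simp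
    have "real (k * (n - k)) * (- p * c0) \<le> - (11/20) * real k * d" using i1 e1 e2 by linarith
    thus ?thesis by simp
  qed
  finally have qb: "q ^ (k * (n - k)) \<le> exp (- (11/20) * real k * d)" .
  have A: "exp (real k * real n * p / 2) * q ^ (k * (n - k)) \<le> exp (- real k * d / 20)"
  proof -
    have "exp (real k * real n * p / 2) * q ^ (k * (n - k)) \<le> exp (real k * real n * p / 2) * exp (- (11/20) * real k * d)"
      using qb by (intro mult_left_mono) auto
    also have "\<dots> = exp (- real k * d / 20)" unfolding d_def by (simp add: mult_exp_exp algebra_simps)
    finally show ?thesis .
  qed
  have B: "real (n choose k) * real k ^ k \<le> real n ^ k * exp (real k)"
  proof -
    have "real (n choose k) * real k ^ k = (real (n choose k) * fact k) * (real k ^ k / fact k)" by simp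
    also have "\<dots> \<le> real n ^ k * exp (real k)"
      using choose_fact_le[of k n] kn pow_fact_le_exp[of k] by (intro mult_mono) auto
    finally show ?thesis .
  qed
  have C: "real n ^ k * p ^ (k - 1) \<le> real n * d ^ k"
  proof -
    have "real n ^ k * p ^ (k - 1) = real n * d ^ (k - 1)"
      using k2 unfolding d_def by (cases k) (auto simp: power_mult_distrib)
    also have "\<dots> \<le> real n * d ^ k" using dpos by (intro mult_left_mono power_increasing) auto
    finally show ?thesis .
  qed
  have D: "d * exp 1 * exp (- d / 20) \<le> exp (- d / 80)"
  proof -
    have "exp (3 * d / 160) \<ge> 1 + 3 * d / 160" by (rule exp_ge_add_one_self)
    hence h: "3 * d / 160 \<le> exp (3 * d / 160)" by linarith
    have h2: "(3 * d / 160) * (3 * d / 160) \<le> exp (3 * d / 160) * exp (3 * d / 160)"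
      using dpos by (intro mult_mono[OF h h]) auto
    have h3: "exp (3 * d / 160) * exp (3 * d / 160) = exp (3 * d / 80)"
      by (simp add: mult_exp_exp)
    have h4: "(3 * d / 160) * (3 * d / 160) = d * (9 * d / 25600)" by simp
    have h5: "3 \<le> 9 * d / 25600" using d unfolding d_def by (simp add: mult.commute)
    have h6: "d * 3 \<le> d * (9 * d / 25600)" using dpos by (intro mult_left_mono[OF h5]) auto
    have h7: "d * exp 1 \<le> d * 3" using dpos exp_le by (intro mult_left_mono) auto
    have "d * exp 1 \<le> exp (3 * d / 80)" using h2 h3 h4 h6 h7 by linarith
    hence "d * exp 1 * exp (- d / 20) \<le> exp (3 * d / 80) * exp (- d / 20)" by (intro mult_right_mono) auto
    also have "\<dots> = exp (- d / 80)" by (simp add: mult_exp_exp)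
    finally show ?thesis .
  qed
  have E: "exp (- real k * d / 80) \<le> 1 / real n ^ 2"
  proof -
    have "- real k * d / 80 = - (real k * d) / 80" by simp
    hence "- real k * d / 80 \<le> - 2 * ln (real n)" using kd unfolding d_def by linarith
    hence "exp (- real k * d / 80) \<le> exp (- 2 * ln (real n))" by simp
    also have "exp (- 2 * ln (real n)) = inverse (exp (ln (real n)) * exp (ln (real n)))"
      by (simp add: exp_minus mult_exp_exp)
    also have "\<dots> = 1 / real n ^ 2" using n1 by (simp add: power2_eq_square divide_inverse)
    finally show ?thesis .
  qed
  define B0 where "B0 = real (n choose k) * real k ^ k"
  define Q0 where "Q0 = exp (real k * real n * p / 2) * q ^ (k * (n - k))"
  have "real (n choose k) * real k ^ k * (exp (real k * real n * p / 2) * p ^ (k - 1) * q ^ (k * (n - k)))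
      = B0 * p ^ (k - 1) * Q0"
    unfolding B0_def Q0_def by (simp only: mult_ac)
  also have "\<dots> \<le> (real n ^ k * exp (real k)) * p ^ (k - 1) * exp (- real k * d / 20)"
  proof (rule mult_mono)
    show "B0 * p ^ (k - 1) \<le> real n ^ k * exp (real k) * p ^ (k - 1)"
      using B p unfolding B0_def by (intro mult_right_mono) auto
    show "Q0 \<le> exp (- real k * d / 20)" using A unfolding Q0_def .
    show "0 \<le> real n ^ k * exp (real k) * p ^ (k - 1)" using p by simp
    show "0 \<le> Q0" unfolding Q0_def using q0 by simp
  qed
  also have "\<dots> = (real n ^ k * p ^ (k - 1)) * (exp (real k) * exp (- real k * d / 20))" by (simp only: mult_ac)
  also have "\<dots> \<le> (real n * d ^ k) * (exp (real k) * exp (- real k * d / 20))"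
    using C by (intro mult_right_mono) auto
  also have "exp (real k) * exp (- real k * d / 20) = (exp 1 * exp (- d / 20)) ^ k"
  proof -
    have "exp (real k) * exp (- real k * d / 20) = exp (real k * (1 + - d / 20))"
      by (simp add: mult_exp_exp algebra_simps)
    also have "\<dots> = exp (1 + - d / 20) ^ k" by (rule exp_of_nat_mult)
    also have "\<dots> = (exp 1 * exp (- d / 20)) ^ k" by (simp add: mult_exp_exp)
    finally show ?thesis .
  qed
  also have "(real n * d ^ k) * (exp 1 * exp (- d / 20)) ^ k = real n * (d * exp 1 * exp (- d / 20)) ^ k"
    by (simp add: power_mult_distrib mult_ac)
  also have "\<dots> \<le> real n * exp (- d / 80) ^ k"
    using D dpos by (intro mult_left_mono power_mono) auto
  also have "exp (- d / 80) ^ k = exp (- real k * d / 80)"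
    using exp_of_nat_mult[of k "- d / 80"] by simp
  also have "real n * exp (- real k * d / 80) \<le> real n * (1 / real n ^ 2)" using E by (intro mult_left_mono) auto
  also have "\<dots> = 1 / real n" by (simp add: power2_eq_square)
  finally show ?thesis unfolding q_def .
qed

lemma card_Idx:
  assumes k: "1 \<le> k"
  shows "finite (Idx n k)" "real (card (Idx n k)) \<le> real (n choose k) * real k ^ k"
proof -
  define Xs where "Xs = {X. X \<subseteq> {..<n} \<and> card X = k}"
  define W where "W = Sigma Xs (\<lambda>X. Sigma X (\<lambda>rt. (X - {rt}) \<rightarrow>\<^sub>E X))"
  have sub: "Idx n k \<subseteq> W"
  proof
    fix i assume "i \<in> Idx n k"
    then obtain X rt par where i: "i = (X, rt, par)" "X \<subseteq> {..<n}" "card X = k" "rt \<in> X"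
      "par \<in> (X-{rt}) \<rightarrow>\<^sub>E X" unfolding Idx_def by blast
    have "X \<in> Xs" unfolding Xs_def using i by blast
    moreover have "(rt, par) \<in> Sigma X (\<lambda>rt. (X - {rt}) \<rightarrow>\<^sub>E X)" using i(4,5) by blast
    ultimately show "i \<in> W" unfolding W_def i(1) by blast
  qed
  have finXs: "finite Xs" unfolding Xs_def by (rule finite_subset[of _ "Pow {..<n}"]) auto
  have finXs': "finite X" if "X \<in> Xs" for X
  proof -
    have "X \<subseteq> {..<n}" using that unfolding Xs_def by blast
    thus ?thesis by (rule finite_subset) simp
  qed
  have finP: "finite ((X - {rt}) \<rightarrow>\<^sub>E X)" if "X \<in> Xs" for X rt
    using finXs'[OF that] by (intro finite_PiE) auto
  have finS: "finite (Sigma X (\<lambda>rt. (X - {rt}) \<rightarrow>\<^sub>E X))" if "X \<in> Xs" for X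
    by (rule finite_SigmaI[OF finXs'[OF that]]) (rule finP[OF that])
  have finW: "finite W" unfolding W_def by (rule finite_SigmaI[OF finXs]) (rule finS)
  show "finite (Idx n k)" using finW sub by (rule finite_subset[rotated])
  have "card (Idx n k) \<le> card W" using finW sub by (rule card_mono)
  also have "card W = (\<Sum>X\<in>Xs. card (Sigma X (\<lambda>rt. (X - {rt}) \<rightarrow>\<^sub>E X)))"
    unfolding W_def by (rule card_SigmaI[OF finXs]) (use finS in blast)
  also have "\<dots> = (\<Sum>X\<in>Xs. k ^ k)"
  proof (rule sum.cong[OF refl])
    fix X assume X: "X \<in> Xs"
    have "card (Sigma X (\<lambda>rt. (X - {rt}) \<rightarrow>\<^sub>E X)) = (\<Sum>rt\<in>X. card ((X - {rt}) \<rightarrow>\<^sub>E X))"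
      by (rule card_SigmaI[OF finXs'[OF X]]) (use finP[OF X] in blast)
    also have "\<dots> = (\<Sum>rt\<in>X. k ^ (k - 1))"
    proof (rule sum.cong[OF refl])
      fix rt assume rt: "rt \<in> X"
      have "card ((X - {rt}) \<rightarrow>\<^sub>E X) = card X ^ card (X - {rt})"
        using finXs'[OF X] by (intro card_funcsetE) auto
      also have "card X = k" using X unfolding Xs_def by blast
      also have "card (X - {rt}) = k - 1" using rt finXs'[OF X] \<open>card X = k\<close> by simp
      finally show "card ((X - {rt}) \<rightarrow>\<^sub>E X) = k ^ (k - 1)" .
    qed
    also have "\<dots> = k * k ^ (k - 1)" using X unfolding Xs_def by simp
    also have "\<dots> = k ^ k" using k by (cases k) auto
    finally show "card (Sigma X (\<lambda>rt. (X - {rt}) \<rightarrow>\<^sub>E X)) = k ^ k" .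
  qed
  also have "\<dots> = card Xs * k ^ k" by simp
  also have "card Xs = n choose k" unfolding Xs_def using n_subsets[of "{..<n}" k] by simp
  finally have "card (Idx n k) \<le> (n choose k) * k ^ k" .
  hence "real (card (Idx n k)) \<le> real ((n choose k) * k ^ k)" by (simp only: of_nat_le_iff)
  thus "real (card (Idx n k)) \<le> real (n choose k) * real k ^ k" by simp
qed

lemma bad_prob:
  fixes n k :: nat and p :: real
  assumes k2: "2 \<le> k" and kn: "12 * k \<le> n" and p: "0 \<le> p" "p \<le> 1"
    and d: "10000 \<le> real n * p" and kd: "160 * ln (real n) \<le> real k * (real n * p)" and n1: "1 \<le> n"
  shows "measure_pmf.prob (gnp n p)
     {G. \<not> (\<forall>v \<in> low_vertices n p G. card (component (low_vertices n p G) G v) \<le> k - 1)} \<le> 1 / real n"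
proof -
  define bnd where "bnd = exp (real k * real n * p / 2) * p ^ (k - 1) * (1 - p + p * exp (-1)) ^ (k * (n - k))"
  have finI: "finite (Idx n k)" using card_Idx k2 by auto
  have "measure_pmf.prob (gnp n p)
     {G. \<not> (\<forall>v \<in> low_vertices n p G. card (component (low_vertices n p G) G v) \<le> k - 1)}
     \<le> measure_pmf.prob (gnp n p) (\<Union>i \<in> Idx n k. (case i of (X, rt, par) \<Rightarrow> Ev n p X rt par))"
    by (rule measure_pmf.finite_measure_mono[OF bad_subset]) (use k2 in auto)
  also have "\<dots> \<le> (\<Sum>i \<in> Idx n k. measure_pmf.prob (gnp n p) (case i of (X, rt, par) \<Rightarrow> Ev n p X rt par))"
    by (rule measure_pmf.finite_measure_subadditive_finite[OF finI]) auto
  also have "\<dots> \<le> (\<Sum>i \<in> Idx n k. bnd)"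
  proof (rule sum_mono)
    fix i assume "i \<in> Idx n k"
    then obtain X rt par where i: "i = (X, rt, par)" "X \<subseteq> {..<n}" "card X = k" "rt \<in> X"
      "par \<in> (X-{rt}) \<rightarrow>\<^sub>E X" "\<forall>y\<in>X-{rt}. par y \<noteq> y" "inj_on (\<lambda>y. {y, par y}) (X-{rt})"
      unfolding Idx_def by auto
    have "\<forall>y\<in>X-{rt}. par y \<in> X \<and> par y \<noteq> y" using i(5,6) by auto
    thus "measure_pmf.prob (gnp n p) (case i of (X, rt, par) \<Rightarrow> Ev n p X rt par) \<le> bnd"
      unfolding bnd_def i(1) using event_bound[OF i(2,3,4) _ i(7) p] by simp
  qed
  also have "\<dots> = real (card (Idx n k)) * bnd" by simp
  also have "\<dots> \<le> real (n choose k) * real k ^ k * bnd"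
    using card_Idx(2)[of k n] k2 p unfolding bnd_def by (intro mult_right_mono) auto
  also have "\<dots> \<le> 1 / real n" unfolding bnd_def by (rule analytic[OF assms])
  finally show ?thesis .
qed

theorem mainTheorem11:
  "\<exists>\<beta>::real. \<beta> > 0 \<and>
     (\<forall>(r :: nat \<Rightarrow> nat) (p :: nat \<Rightarrow> real).
        (\<forall>n. 0 \<le> p n \<and> p n \<le> 1) \<longrightarrow>
        (\<forall>\<^sub>F n in sequentially. 4 \<le> r n) \<longrightarrow>
        (\<lambda>n. real (r n)) \<in> o(\<lambda>n. ln (real n)) \<longrightarrow>
        (\<forall>\<^sub>F n in sequentially. p n \<ge> \<beta> * ln (real n) / (real (r n) * real n)) \<longrightarrow>
        ((\<lambda>n. measure_pmf.prob (gnp n (p n))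
            {G. \<forall>v \<in> low_vertices n (p n) G.
                  card (component (low_vertices n (p n) G) G v) \<le> r n - 3})
          \<longlonglongrightarrow> 1))"
proof (rule exI[of _ 320], intro conjI allI impI)
  fix r :: "nat \<Rightarrow> nat" and p :: "nat \<Rightarrow> real"
  assume p01: "\<forall>n. 0 \<le> p n \<and> p n \<le> 1" and r4: "\<forall>\<^sub>F n in sequentially. 4 \<le> r n"
    and ro: "(\<lambda>n. real (r n)) \<in> o(\<lambda>n. ln (real n))"
    and pb: "\<forall>\<^sub>F n in sequentially. p n \<ge> 320 * ln (real n) / (real (r n) * real n)"
  define good where "good = (\<lambda>n. {G. \<forall>v \<in> low_vertices n (p n) G.
                  card (component (low_vertices n (p n) G) G v) \<le> r n - 3})"
  have rs: "\<forall>\<^sub>F n in sequentially. real (r n) \<le> 1/32 * norm (ln (real n))"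
    using landau_o.smallD[OF ro, of "1/32"] by simp
  have n3: "\<forall>\<^sub>F n in sequentially. (3::nat) \<le> n" by (rule eventually_ge_at_top)
  have ev: "\<forall>\<^sub>F n in sequentially. 1 - 1 / real n \<le> measure_pmf.prob (gnp n (p n)) (good n)"
    using r4 rs pb n3
  proof eventually_elim
    case (elim n)
    define k where "k = r n - 2"
    have k2: "2 \<le> k" using elim unfolding k_def by simp
    have rk: "real (r n) = real k + 2" using elim unfolding k_def by simp
    have ln1: "1 \<le> ln (real n)"
    proof -
      have "exp 1 \<le> real n" using exp_le elim(4) by simp
      thus ?thesis using elim(4) by (subst ln_ge_iff) auto
    qed
    have rln: "real (r n) \<le> ln (real n) / 32" using elim(2) ln1 by simp
    have lnn: "ln (real n) \<le> real n" using elim(4) by (intro ln_le_minus_one[THEN order_trans]) auto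
    have kn: "12 * k \<le> n"
    proof -
      have "real (12 * k) \<le> real n" using rln lnn rk by simp
      thus ?thesis by (simp only: of_nat_le_iff)
    qed
    have npos: "0 < real n" using elim(4) by simp
    have rpos: "0 < real (r n)" using elim(1) by simp
    have key: "320 * ln (real n) \<le> real (r n) * (real n * p n)"
    proof -
      have "320 * ln (real n) / (real (r n) * real n) \<le> p n" using elim(3) .
      hence "320 * ln (real n) \<le> p n * (real (r n) * real n)" using npos rpos by (simp add: divide_le_eq)
      thus ?thesis by (simp add: mult_ac)
    qed
    have dpos: "0 \<le> real n * p n" using p01 npos by simp
    have d: "10000 \<le> real n * p n"
    proof -
      have "real (r n) * (real n * p n) \<le> ln (real n) / 32 * (real n * p n)"
        using rln dpos by (intro mult_right_mono) auto
      hence "320 * ln (real n) \<le> ln (real n) / 32 * (real n * p n)" using key by linarith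
      hence "ln (real n) * 10240 \<le> ln (real n) * (real n * p n)" by (simp add: algebra_simps)
      hence "10240 \<le> real n * p n" using ln1 by (subst (asm) mult_le_cancel_left) auto
      thus ?thesis by simp
    qed
    have kd: "160 * ln (real n) \<le> real k * (real n * p n)"
    proof -
      have "real (r n) \<le> 2 * real k" using rk k2 by simp
      hence "real (r n) * (real n * p n) \<le> 2 * real k * (real n * p n)" using dpos by (intro mult_right_mono) auto
      thus ?thesis using key by linarith
    qed
    define Bad where "Bad = {G. \<not> (\<forall>v \<in> low_vertices n (p n) G. card (component (low_vertices n (p n) G) G v) \<le> k - 1)}"
    have bp: "measure_pmf.prob (gnp n (p n)) Bad \<le> 1 / real n"
      unfolding Bad_def by (rule bad_prob[OF k2 kn _ _ d kd]) (use p01 elim(4) in auto)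
    have k3: "k - 1 = r n - 3" unfolding k_def by simp
    have gc: "good n = space (measure_pmf (gnp n (p n))) - Bad"
      unfolding good_def Bad_def k3 by (rule set_eqI) simp
    have "measure_pmf.prob (gnp n (p n)) (good n) = 1 - measure_pmf.prob (gnp n (p n)) Bad"
      unfolding gc by (rule measure_pmf.prob_compl) simp
    thus ?case using bp by linarith
  qed
  have lim: "(\<lambda>n. 1 - 1 / real n) \<longlonglongrightarrow> 1"
    using tendsto_diff[OF tendsto_const[of 1] lim_1_over_n] by simp
  show "(\<lambda>n. measure_pmf.prob (gnp n (p n)) (good n)) \<longlonglongrightarrow> 1"
    by (rule tendsto_sandwich[OF ev _ lim tendsto_const]) (simp add: measure_pmf.prob_le_1)
qed (simp)

end
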